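(* Let $A(x)=\sum_{i=0}^d a_ix^i\in\mathbb{Z}[x]$ be primitive of degree $d\ge1$ with $a_0\ne0$, and let $m>d$. Then $\Lambda_m$ is a submodule of $\Theta_m$ of index $|a_d|^{m-d}$.
   Context: A vector $(x_1,\dots,x_m)$ is a linear recurrence determined by $A$ if $\sum_{i=0}^d a_ix_{j+i}=0$ for all $1\le j\le m-d$. $\Lambda_m\subseteq\mathbb{Z}^m$ is the $\mathbb{Z}$-module of vectors in $\mathbb{Z}^m$ that are linear recurrences determined by $A$; $\Theta_m\subseteq\mathbb{Z}^d\times\mathbb{Q}^{m-d}$ is the $\mathbb{Z}$-module of vectors in $\mathbb{Q}^m$ that are linear recurrences determined by $A$ and whose first $d$ coordinates are integers. *)

theory Defs
  imports "HOL-Computational_Algebra.Computational_Algebra" "HOL-Algebra.Coset"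
begin

text \<open>Vectors in Q^m are rational lists of length m; coordinate x_k of the paper
  (1-indexed) is the list entry at position k-1.\<close>

definition is_lin_rec :: "int poly \<Rightarrow> nat \<Rightarrow> rat list \<Rightarrow> bool" where
  "is_lin_rec A m x \<longleftrightarrow> length x = m \<and>
     (\<forall>j. j + degree A < m \<longrightarrow>
        (\<Sum>i\<le>degree A. of_int (coeff A i) * x ! (j + i)) = 0)"

definition Lambda :: "int poly \<Rightarrow> nat \<Rightarrow> rat list set" where
  "Lambda A m = {x. is_lin_rec A m x \<and> (\<forall>i<m. x ! i \<in> \<int>)}"

definition Theta :: "int poly \<Rightarrow> nat \<Rightarrow> rat list set" where
  "Theta A m = {x. is_lin_rec A m x \<and> (\<forall>i<degree A. x ! i \<in> \<int>)}"

definition vec_add_group :: "nat \<Rightarrow> rat list set \<Rightarrow> rat list monoid" where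
  "vec_add_group m S = \<lparr>carrier = S, mult = (\<lambda>x y. map2 (+) x y), one = replicate m 0\<rparr>"

end

theory Submission
  imports Defs
begin


definition rw :: "int poly \<Rightarrow> (nat \<Rightarrow> int) \<Rightarrow> nat \<Rightarrow> int" where
  "rw A x j = (\<Sum>i\<le>degree A. coeff A i * x (j+i))"

lemma rw_add: "rw A (\<lambda>n. x n + y n) j = rw A x j + rw A y j"
  by (simp add: rw_def distrib_left sum.distrib)

lemma rw_diff: "rw A (\<lambda>n. x n - y n) j = rw A x j - rw A y j"
  by (simp add: rw_def right_diff_distrib sum_subtractf)

lemma rw_smult: "rw A (\<lambda>n. c * x n) j = c * rw A x j"
  by (simp add: rw_def sum_distrib_left algebra_simps)

lemma rw_ind: "rw A (\<lambda>n. if n = q then 1 else 0) j =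
   (if j \<le> q \<and> q \<le> j + degree A then coeff A (q - j) else 0)"
proof -
  have "rw A (\<lambda>n. if n = q then 1 else 0) j =
     (\<Sum>i\<in>{..degree A}. if i = q - j then (if j \<le> q then coeff A i else 0) else 0)"
    unfolding rw_def by (rule sum.cong) auto
  also have "\<dots> = (if j \<le> q \<and> q \<le> j + degree A then coeff A (q - j) else 0)"
    by (subst sum.delta) auto
  finally show ?thesis .
qed

lemma rw_upd: "rw A (\<lambda>n. x n + v * (if n = q then 1 else 0)) j =
   rw A x j + v * (if j \<le> q \<and> q \<le> j + degree A then coeff A (q - j) else 0)"
  by (simp only: rw_add rw_smult rw_ind)

lemma modp_solve:
  fixes p :: int
  assumes p: "prime p" and s1: "\<not> p dvd coeff A s" and s2: "\<forall>i<s. p dvd coeff A i"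
  shows "\<exists>x. \<forall>j\<le>N. p dvd rw A x j - t j"
proof -
  have sd: "s \<le> degree A" using s1 by (metis dvd_0_right le_degree)
  have "coprime p (coeff A s)" using p s1 by (simp add: prime_imp_coprime)
  then obtain u v where uv: "u * coeff A s + v * p = 1"
    using bezout_int[of "coeff A s" p] by (metis coprime_iff_gcd_eq_1 gcd.commute)
  have "\<exists>x. \<forall>j. N + 1 - n \<le> j \<and> j \<le> N \<longrightarrow> p dvd rw A x j - t j" if "n \<le> Suc N" for n
    using that
  proof (induction n)
    case 0
    then show ?case by auto
  next
    case (Suc n)
    then obtain x where x: "\<forall>j. N + 1 - n \<le> j \<and> j \<le> N \<longrightarrow> p dvd rw A x j - t j" by auto
    define r where "r = N - n"
    have r: "N + 1 - Suc n = r" "N + 1 - n = Suc r" using Suc.prems by (auto simp: r_def)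
    define w where "w = u * (t r - rw A x r)"
    define x' where "x' = (\<lambda>k. x k + w * (if k = r + s then 1 else 0))"
    have "p dvd rw A x' j - t j" if "r \<le> j" "j \<le> N" for j
    proof (cases "j = r")
      case True
      have "rw A x' j = rw A x r + w * coeff A s" using True sd
        unfolding x'_def rw_upd by simp
      hence "rw A x' j - t j = (rw A x r - t r) * (1 - u * coeff A s)"
        using True unfolding w_def by (simp add: algebra_simps)
      also have "1 - u * coeff A s = v * p" using uv by linarith
      finally have "rw A x' j - t j = (rw A x r - t r) * v * p" by simp
      then show ?thesis by simp
    next
      case False
      hence jr: "Suc r \<le> j" using that by simp
      have h1: "p dvd (if j \<le> r + s \<and> r + s \<le> j + degree A then coeff A (r + s - j) else 0)"
        using s2 jr by auto
      have h2: "p dvd rw A x j - t j" using x jr that r by auto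
      have "p dvd (rw A x j - t j) + w * (if j \<le> r + s \<and> r + s \<le> j + degree A then coeff A (r + s - j) else 0)"
        using h1 h2 by (intro dvd_add dvd_mult) auto
      moreover have "rw A x' j - t j = (rw A x j - t j) + w * (if j \<le> r + s \<and> r + s \<le> j + degree A then coeff A (r + s - j) else 0)"
        unfolding x'_def rw_upd by simp
      ultimately show ?thesis by metis
    qed
    then show ?case using r by metis
  qed
  from this[of "Suc N"] show ?thesis by auto
qed

lemma T_from_S:
  fixes A :: "int poly"
  assumes cont: "content A = 1" and deg: "degree A \<ge> 1"
    and S: "\<forall>b. \<exists>x. \<forall>j. j + degree A < k \<longrightarrow> rw A x j = b j" and dk: "degree A \<le> k"
  shows "\<exists>y. (\<forall>j. j + degree A < k \<longrightarrow> rw A y j = 0) \<and> rw A y (k - degree A) = c"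
proof -
  define d where "d = degree A"
  define N where "N = k - d"
  define T where "T = {c. \<exists>y. (\<forall>j. j + d < k \<longrightarrow> rw A y j = 0) \<and> rw A y N = c}"
  have Tdiff: "c1 - c2 \<in> T" if h: "c1 \<in> T" "c2 \<in> T" for c1 c2
  proof -
    obtain y1 where y1: "\<forall>j. j + d < k \<longrightarrow> rw A y1 j = 0" "rw A y1 N = c1" using h(1) T_def by auto
    obtain y2 where y2: "\<forall>j. j + d < k \<longrightarrow> rw A y2 j = 0" "rw A y2 N = c2" using h(2) T_def by auto
    show ?thesis unfolding T_def
      by (rule CollectI, rule exI[of _ "\<lambda>n. y1 n - y2 n"]) (simp add: rw_diff y1 y2)
  qed
  have Tmult: "q * c \<in> T" if h: "c \<in> T" for c q
  proof -
    obtain y1 where y1: "\<forall>j. j + d < k \<longrightarrow> rw A y1 j = 0" "rw A y1 N = c" using h T_def by auto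
    show ?thesis unfolding T_def
      by (rule CollectI, rule exI[of _ "\<lambda>n. q * y1 n"]) (simp add: rw_smult y1)
  qed
  have A0: "A \<noteq> 0" using deg by auto
  have lc: "coeff A d \<noteq> 0" using A0 unfolding d_def by simp
  have Tlc: "coeff A d \<in> T" unfolding T_def
  proof (rule CollectI, rule exI[of _ "\<lambda>n. if n = k then 1 else 0"], intro conjI allI impI)
    fix j assume "j + d < k"
    then show "rw A (\<lambda>n. if n = k then 1 else 0) j = 0" unfolding rw_ind d_def by simp
  next
    show "rw A (\<lambda>n. if n = k then 1 else 0) N = coeff A d" unfolding rw_ind N_def d_def using dk by simp
  qed
  have Tprime: "\<exists>c\<in>T. \<not> p dvd c" if p: "prime p" for p :: int
  proof -
    have "\<exists>i. \<not> p dvd coeff A i"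
    proof (rule ccontr)
      assume "\<not> ?thesis"
      hence "[:p:] dvd A" by (simp add: const_poly_dvd_iff)
      hence "p dvd content A" by (simp add: const_poly_dvd_iff_dvd_content)
      thus False using cont p not_prime_unit by auto
    qed
    define s where "s = (LEAST i. \<not> p dvd coeff A i)"
    have s1: "\<not> p dvd coeff A s" unfolding s_def by (rule LeastI_ex) fact
    have s2: "\<forall>i<s. p dvd coeff A i" unfolding s_def using not_less_Least by blast
    obtain x0 where x0: "\<forall>j\<le>N. p dvd rw A x0 j - (if j = N then 1 else 0)"
      using modp_solve[OF p s1 s2, of N "\<lambda>j. if j = N then 1 else 0"] by auto
    obtain z where z: "\<forall>j. j + degree A < k \<longrightarrow> rw A z j = rw A x0 j div p"
      using spec[OF S, of "\<lambda>j. rw A x0 j div p"] by blast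
    define y where "y = (\<lambda>n. x0 n - p * z n)"
    have "rw A y j = 0" if "j + d < k" for j
    proof -
      have jN: "j \<le> N" "j \<noteq> N" using that N_def by auto
      have "p dvd rw A x0 j" using x0 jN by auto
      then show ?thesis using z that unfolding y_def rw_diff rw_smult d_def by simp
    qed
    moreover have "\<not> p dvd rw A y N"
    proof
      assume "p dvd rw A y N"
      hence "p dvd rw A x0 N - p * rw A z N" unfolding y_def rw_diff rw_smult .
      hence "p dvd (rw A x0 N - p * rw A z N) + p * rw A z N" by (intro dvd_add) simp_all
      hence "p dvd rw A x0 N" by simp
      moreover have "p dvd rw A x0 N - 1" using x0 by auto
      ultimately have "p dvd rw A x0 N - (rw A x0 N - 1)" by (rule dvd_diff)
      hence "p dvd 1" by simp
      thus False using p not_prime_unit by blast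
    qed
    ultimately show ?thesis unfolding T_def by blast
  qed
  define g where "g = (LEAST n::nat. n > 0 \<and> int n \<in> T)"
  have ex: "nat \<bar>coeff A d\<bar> > 0 \<and> int (nat \<bar>coeff A d\<bar>) \<in> T"
  proof -
    have "sgn (coeff A d) * coeff A d \<in> T" by (rule Tmult[OF Tlc])
    moreover have "\<bar>coeff A d\<bar> = sgn (coeff A d) * coeff A d" by (simp add: sgn_if)
    ultimately have "\<bar>coeff A d\<bar> \<in> T" by simp
    moreover have "\<bar>coeff A d\<bar> > 0" using lc by simp
    ultimately show ?thesis by simp
  qed
  have g: "g > 0" "int g \<in> T" using LeastI[of "\<lambda>n. n > 0 \<and> int n \<in> T", OF ex] unfolding g_def by auto
  have gdvd: "int g dvd c" if "c \<in> T" for c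
  proof -
    have "c - (c div int g) * int g \<in> T" by (rule Tdiff[OF that Tmult[OF g(2)]])
    hence cm: "c mod int g \<in> T" by (simp add: minus_div_mult_eq_mod)
    have "c mod int g = 0"
    proof (rule ccontr)
      assume ne: "c mod int g \<noteq> 0"
      have pos: "c mod int g > 0" using ne g(1) by (simp add: order_le_neq_trans)
      have "c mod int g < int g" using g(1) by simp
      hence "nat (c mod int g) < g" using pos by (simp add: nat_less_iff)
      moreover have "nat (c mod int g) > 0 \<and> int (nat (c mod int g)) \<in> T" using pos cm by simp
      ultimately show False using not_less_Least[of "nat (c mod int g)" "\<lambda>n. n > 0 \<and> int n \<in> T"]
        unfolding g_def by blast
    qed
    thus ?thesis by (simp add: dvd_eq_mod_eq_0)
  qed
  have "g = 1"
  proof (rule ccontr)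
    assume "g \<noteq> 1"
    then obtain p where p: "prime p" "p dvd g" using prime_factor_nat by blast
    have pi: "prime (int p)" using p by simp
    obtain c where c: "c \<in> T" "\<not> int p dvd c" using Tprime[OF pi] by blast
    have "int p dvd int g" using p by simp
    hence "int p dvd c" using gdvd[OF c(1)] by (rule dvd_trans)
    thus False using c by simp
  qed
  hence "c * 1 \<in> T" using Tmult[OF g(2)] by simp
  thus ?thesis unfolding T_def N_def d_def by simp
qed

lemma S_all:
  fixes A :: "int poly"
  assumes cont: "content A = 1" and deg: "degree A \<ge> 1"
  shows "\<forall>b. \<exists>x. \<forall>j. j + degree A < k \<longrightarrow> rw A x j = b j"
proof (induction k)
  case 0
  then show ?case by auto
next
  case (Suc k)
  show ?case
  proof (cases "degree A \<le> k")
    case False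
    then show ?thesis by auto
  next
    case True
    show ?thesis
    proof
      fix b
      obtain x' where x': "\<forall>j. j + degree A < k \<longrightarrow> rw A x' j = b j" using Suc.IH by blast
      obtain y where y: "\<forall>j. j + degree A < k \<longrightarrow> rw A y j = 0"
        "rw A y (k - degree A) = b (k - degree A) - rw A x' (k - degree A)"
        using T_from_S[OF cont deg Suc.IH True] by blast
      have "rw A (\<lambda>n. x' n + y n) j = b j" if "j + degree A < Suc k" for j
      proof (cases "j + degree A < k")
        case True
        then show ?thesis using x' y by (simp add: rw_add)
      next
        case False
        hence "j = k - degree A" using that by simp
        then show ?thesis using y by (simp add: rw_add)
      qed
      then show "\<exists>x. \<forall>j. j + degree A < Suc k \<longrightarrow> rw A x j = b j" by blast
    qed
  qed
qed

lemma T_all: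
  fixes A :: "int poly"
  assumes cont: "content A = 1" and deg: "degree A \<ge> 1" and dk: "degree A \<le> k"
  shows "\<exists>y. (\<forall>j. j + degree A < k \<longrightarrow> rw A y j = 0) \<and> rw A y (k - degree A) = c"
  by (rule T_from_S[OF cont deg S_all[OF cont deg] dk])



definition frl :: "rat list \<Rightarrow> rat list" where "frl xs = map frac xs"

definition ee :: "int poly \<Rightarrow> nat \<Rightarrow> rat list \<Rightarrow> rat" where
  "ee A m x = - (\<Sum>i<degree A. of_int (coeff A i) * x ! (m - degree A + i)) / of_int (coeff A (degree A))"

lemma lin_rec_map:
  "is_lin_rec A m (map f [0..<m]) \<longleftrightarrow>
     (\<forall>j. j + degree A < m \<longrightarrow> (\<Sum>i\<le>degree A. of_int (coeff A i) * f (j+i)) = 0)"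
proof -
  have "(\<Sum>i\<le>degree A. of_int (coeff A i) * map f [0..<m] ! (j+i)) =
        (\<Sum>i\<le>degree A. of_int (coeff A i) * f (j+i))" if "j + degree A < m" for j
    using that by (intro sum.cong) auto
  then show ?thesis unfolding is_lin_rec_def by auto
qed

lemma row_app_lt:
  assumes "length x = m" "j + degree A < m"
  shows "(\<Sum>i\<le>degree A. of_int (coeff A i) * (x @ [y]) ! (j+i)) =
         (\<Sum>i\<le>degree A. of_int (coeff A i) * x ! (j+i))"
  using assms by (intro sum.cong) (auto simp: nth_append)

lemma row_app_last:
  assumes "length x = m" "degree A \<le> m"
  shows "(\<Sum>i\<le>degree A. of_int (coeff A i) * (x @ [y]) ! (m - degree A + i)) =
         (\<Sum>i<degree A. of_int (coeff A i) * x ! (m - degree A + i)) + of_int (coeff A (degree A)) * y"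
proof -
  have "(\<Sum>i\<le>degree A. of_int (coeff A i) * (x @ [y]) ! (m - degree A + i)) =
        (\<Sum>i<Suc (degree A). of_int (coeff A i) * (x @ [y]) ! (m - degree A + i))"
    by (simp add: lessThan_Suc_atMost)
  also have "\<dots> = (\<Sum>i<degree A. of_int (coeff A i) * (x @ [y]) ! (m - degree A + i))
       + of_int (coeff A (degree A)) * y"
    using assms by (simp add: nth_append)
  also have "(\<Sum>i<degree A. of_int (coeff A i) * (x @ [y]) ! (m - degree A + i)) =
       (\<Sum>i<degree A. of_int (coeff A i) * x ! (m - degree A + i))"
    using assms by (intro sum.cong) (auto simp: nth_append)
  finally show ?thesis .
qed

lemma lin_rec_app:
  assumes "length x = m" "degree A \<le> m"
  shows "is_lin_rec A (Suc m) (x @ [y]) \<longleftrightarrow> is_lin_rec A m x \<and>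
     (\<Sum>i<degree A. of_int (coeff A i) * x ! (m - degree A + i)) + of_int (coeff A (degree A)) * y = 0"
proof -
  have "(\<forall>j. j + degree A < Suc m \<longrightarrow> P j) \<longleftrightarrow> (\<forall>j. j + degree A < m \<longrightarrow> P j) \<and> P (m - degree A)" for P
    using assms(2) by (auto simp: less_Suc_eq)
  then show ?thesis unfolding is_lin_rec_def using assms row_app_lt[OF assms(1)] row_app_last[OF assms]
    by auto
qed

lemma Theta_Suc:
  assumes "degree A \<le> m" "coeff A (degree A) \<noteq> 0"
  shows "Theta A (Suc m) = (\<lambda>x. x @ [ee A m x]) ` Theta A m"
proof
  show "Theta A (Suc m) \<subseteq> (\<lambda>x. x @ [ee A m x]) ` Theta A m"
  proof
    fix z assume z: "z \<in> Theta A (Suc m)"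
    hence lz: "length z = Suc m" by (simp add: Theta_def is_lin_rec_def)
    define x where "x = butlast z"
    define y where "y = last z"
    have zx: "z = x @ [y]" using lz unfolding x_def y_def
      by (metis append_butlast_last_id list.size(3) nat.distinct(1))
    have lx: "length x = m" using lz x_def by simp
    have r: "is_lin_rec A m x" and e:
      "(\<Sum>i<degree A. of_int (coeff A i) * x ! (m - degree A + i)) + of_int (coeff A (degree A)) * y = 0"
      using z zx lin_rec_app[OF lx assms(1)] by (auto simp: Theta_def)
    have "y = ee A m x" using e assms(2) unfolding ee_def by (simp add: field_simps)
    moreover have "x \<in> Theta A m" using r z zx lx assms(1) by (auto simp: Theta_def nth_append)
    ultimately show "z \<in> (\<lambda>x. x @ [ee A m x]) ` Theta A m" using zx by blast
  qed
next
  show "(\<lambda>x. x @ [ee A m x]) ` Theta A m \<subseteq> Theta A (Suc m)"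
  proof
    fix z assume "z \<in> (\<lambda>x. x @ [ee A m x]) ` Theta A m"
    then obtain x where x: "x \<in> Theta A m" "z = x @ [ee A m x]" by blast
    have lx: "length x = m" using x by (simp add: Theta_def is_lin_rec_def)
    have "(\<Sum>i<degree A. of_int (coeff A i) * x ! (m - degree A + i)) + of_int (coeff A (degree A)) * ee A m x = 0"
      using assms(2) unfolding ee_def by (simp add: field_simps)
    then show "z \<in> Theta A (Suc m)" using x lin_rec_app[OF lx assms(1)] lx assms(1)
      by (auto simp: Theta_def nth_append)
  qed
qed

lemma card_frac_range:
  fixes a :: int and w :: rat
  assumes a: "a \<noteq> 0"
  shows "card (range (\<lambda>j::int. frac (w + of_int j / of_int a))) = nat \<bar>a\<bar>"
proof -
  let ?f = "\<lambda>j::int. frac (w + of_int j / of_int a)"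
  have "range ?f = ?f ` {0..<\<bar>a\<bar>}"
  proof
    show "range ?f \<subseteq> ?f ` {0..<\<bar>a\<bar>}"
    proof
      fix z assume "z \<in> range ?f"
      then obtain j where j: "z = ?f j" by blast
      have aa: "\<bar>a\<bar> = sgn a * a" by (simp add: sgn_if)
      have "j = j mod \<bar>a\<bar> + \<bar>a\<bar> * (j div \<bar>a\<bar>)" by simp
      hence "(of_int j :: rat) = of_int (j mod \<bar>a\<bar>) + of_int a * of_int (sgn a * (j div \<bar>a\<bar>))"
        by (metis aa mult.assoc mult.commute of_int_add of_int_mult)
      hence "of_int j / of_int a = of_int (j mod \<bar>a\<bar>) / of_int a + (of_int (sgn a * (j div \<bar>a\<bar>)) :: rat)"
        using a by (simp add: field_simps)
      hence "w + of_int j / of_int a = (w + of_int (j mod \<bar>a\<bar>) / of_int a) + of_int (sgn a * (j div \<bar>a\<bar>))"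
        by simp
      hence "z = ?f (j mod \<bar>a\<bar>)" using j by (metis frac_add_of_int_right)
      moreover have "j mod \<bar>a\<bar> \<in> {0..<\<bar>a\<bar>}" using a by simp
      ultimately show "z \<in> ?f ` {0..<\<bar>a\<bar>}" by blast
    qed
  qed auto
  moreover have "inj_on ?f {0..<\<bar>a\<bar>}"
  proof (rule inj_onI)
    fix i j assume i: "i \<in> {0..<\<bar>a\<bar>}" and j: "j \<in> {0..<\<bar>a\<bar>}" and e: "?f i = ?f j"
    obtain n where n: "w + of_int i / of_int a = w + of_int j / of_int a + of_int n"
      using frac_eqE[OF e] by blast
    hence "(of_int i :: rat) = of_int j + of_int n * of_int a" using a by (simp add: field_simps)
    hence ij: "i - j = n * a" by (metis add_diff_cancel_left' of_int_eq_iff of_int_add of_int_mult)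
    have "\<bar>i - j\<bar> < \<bar>a\<bar>" using i j by auto
    hence "\<bar>n\<bar> * \<bar>a\<bar> < 1 * \<bar>a\<bar>" using ij by (simp add: abs_mult)
    hence "\<bar>n\<bar> < 1" by (meson mult_less_cancel_right not_less abs_ge_zero)
    hence "n = 0" by simp
    then show "i = j" using ij by simp
  qed
  ultimately show ?thesis by (simp add: card_image)
qed

lemma fiber:
  fixes A :: "int poly"
  assumes cont: "content A = 1" and deg: "degree A \<ge> 1" and dm: "degree A \<le> m"
    and x0: "x0 \<in> Theta A m"
  shows "{frac (ee A m x) | x. x \<in> Theta A m \<and> frl x = frl x0} =
     range (\<lambda>j::int. frac (ee A m x0 + of_int j / of_int (coeff A (degree A))))"
proof -
  define d where "d = degree A"
  define ad where "ad = coeff A d"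
  have ad0: "ad \<noteq> 0" using deg unfolding ad_def d_def by auto
  have lx0: "length x0 = m" using x0 by (simp add: Theta_def is_lin_rec_def)
  have "frac (ee A m x) \<in> range (\<lambda>j::int. frac (ee A m x0 + of_int j / of_int ad))"
    if x: "x \<in> Theta A m" "frl x = frl x0" for x
  proof -
    have lx: "length x = m" using x by (simp add: Theta_def is_lin_rec_def)
    have dif: "x ! n - x0 ! n \<in> \<int>" if "n < m" for n
    proof -
      have "frac (x ! n) = frac (x0 ! n)" using x(2) that lx lx0 unfolding frl_def
        by (metis nth_map)
      then obtain k where "x ! n = x0 ! n + of_int k" using frac_eqE by blast
      then show ?thesis by simp
    qed
    define S where "S = (\<Sum>i<d. of_int (coeff A i) * (x ! (m - d + i) - x0 ! (m - d + i)))"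
    have "S \<in> \<int>" unfolding S_def
      by (intro Ints_sum Ints_mult) (use dm in \<open>auto intro!: dif simp: d_def\<close>)
    then obtain J where J: "S = of_int J" by (auto elim: Ints_cases)
    have "ee A m x - ee A m x0 = - S / of_int ad"
      unfolding ee_def S_def d_def[symmetric] ad_def[symmetric]
      by (simp add: sum_subtractf right_diff_distrib diff_divide_distrib)
    hence "ee A m x = ee A m x0 + of_int (- J) / of_int ad" using J by (simp add: field_simps)
    hence "frac (ee A m x) = (\<lambda>j::int. frac (ee A m x0 + of_int j / of_int ad)) (- J)" by simp
    then show ?thesis by (metis rangeI)
  qed
  moreover have "frac (ee A m x0 + of_int j / of_int ad) \<in>
      {frac (ee A m x) | x. x \<in> Theta A m \<and> frl x = frl x0}" for j :: int
  proof -
    obtain y where y: "\<forall>j. j + degree A < m \<longrightarrow> rw A y j = 0" "rw A y (m - degree A) = - j"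
      using T_all[OF cont deg dm] by blast
    define x where "x = map (\<lambda>n. x0 ! n + of_int (y n)) [0..<m]"
    have "is_lin_rec A m x" unfolding x_def lin_rec_map
    proof (intro allI impI)
      fix j' assume j': "j' + degree A < m"
      have "(\<Sum>i\<le>degree A. of_int (coeff A i) * (x0 ! (j'+i) + of_int (y (j'+i)))) =
         (\<Sum>i\<le>degree A. of_int (coeff A i) * x0 ! (j'+i)) + of_int (rw A y j')"
        unfolding rw_def by (simp add: distrib_left sum.distrib)
      also have "\<dots> = 0" using x0 j' y(1) by (simp add: Theta_def is_lin_rec_def)
      finally show "(\<Sum>i\<le>degree A. of_int (coeff A i) * (x0 ! (j'+i) + of_int (y (j'+i)))) = 0" .
    qed
    moreover have "\<forall>i<degree A. x ! i \<in> \<int>"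
      using x0 dm unfolding x_def by (auto simp: Theta_def)
    ultimately have xT: "x \<in> Theta A m" by (simp add: Theta_def)
    have fr: "frl x = frl x0" unfolding frl_def x_def using lx0
      by (intro nth_equalityI) auto
    have ry: "rw A y (m - d) = (\<Sum>i<d. coeff A i * y (m - d + i)) + ad * y m"
    proof -
      have "rw A y (m - d) = (\<Sum>i<Suc d. coeff A i * y (m - d + i))"
        unfolding rw_def d_def by (simp add: lessThan_Suc_atMost)
      also have "\<dots> = (\<Sum>i<d. coeff A i * y (m - d + i)) + ad * y m"
        using dm unfolding ad_def d_def by simp
      finally show ?thesis .
    qed
    have S1: "(\<Sum>i<d. of_int (coeff A i) * x ! (m - d + i)) =
       (\<Sum>i<d. of_int (coeff A i) * x0 ! (m - d + i)) + of_int (\<Sum>i<d. coeff A i * y (m - d + i))"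
    proof -
      have "(\<Sum>i<d. of_int (coeff A i) * x ! (m - d + i)) =
         (\<Sum>i<d. of_int (coeff A i) * (x0 ! (m - d + i) + of_int (y (m - d + i))))"
        unfolding x_def using dm by (intro sum.cong) (auto simp: d_def)
      then show ?thesis by (simp add: distrib_left sum.distrib)
    qed
    have Yv: "(\<Sum>i<d. coeff A i * y (m - d + i)) = - j - ad * y m" using ry y(2) unfolding d_def by simp
    have Yq: "(of_int (\<Sum>i<d. coeff A i * y (m - d + i)) :: rat) = - of_int j - of_int ad * of_int (y m)"
      unfolding Yv by simp
    have "ee A m x = ee A m x0 + of_int j / of_int ad + of_int (y m)"
      using S1 Yq ad0 unfolding ee_def d_def[symmetric] ad_def[symmetric]
      by (simp add: field_simps)
    hence "frac (ee A m x) = frac (ee A m x0 + of_int j / of_int ad)" by simp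
    then show ?thesis using xT fr by (metis (mono_tags, lifting) mem_Collect_eq)
  qed
  ultimately show ?thesis unfolding ad_def d_def by blast
qed

lemma frl_app: "frl (x @ [y]) = frl x @ [frac y]" by (simp add: frl_def)

lemma card_frl:
  fixes A :: "int poly"
  assumes cont: "content A = 1" and deg: "degree A \<ge> 1"
  shows "card (frl ` Theta A (degree A + n)) = nat \<bar>coeff A (degree A)\<bar> ^ n"
proof (induction n)
  case 0
  have "replicate (degree A) 0 \<in> Theta A (degree A)"
    by (simp add: Theta_def is_lin_rec_def)
  moreover have "frl x = replicate (degree A) 0" if "x \<in> Theta A (degree A)" for x
    using that unfolding Theta_def is_lin_rec_def frl_def
    by (intro nth_equalityI) auto
  ultimately have "frl ` Theta A (degree A) = {replicate (degree A) 0}" by force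
  then show ?case by simp
next
  case (Suc n)
  define m where "m = degree A + n"
  define D where "D = nat \<bar>coeff A (degree A)\<bar>"
  have ad0: "coeff A (degree A) \<noteq> 0" using deg by auto
  have D0: "D > 0" using ad0 unfolding D_def by simp
  have dm: "degree A \<le> m" unfolding m_def by simp
  define V where "V = frl ` Theta A m"
  define F where "F = (\<lambda>v. {frac (ee A m x) | x. x \<in> Theta A m \<and> frl x = v})"
  have cV: "card V = D ^ n" using Suc.IH unfolding V_def m_def D_def .
  hence fV: "finite V" using D0 by (metis card_ge_0_finite zero_less_power)
  have cF: "card (F v) = D" if vV: "v \<in> V" for v
  proof -
    obtain x0 where x0: "x0 \<in> Theta A m" "v = frl x0" using vV unfolding V_def by blast
    have "F v = range (\<lambda>j::int. frac (ee A m x0 + of_int j / of_int (coeff A (degree A))))"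
      unfolding F_def x0(2) by (rule fiber[OF cont deg dm x0(1)])
    then show ?thesis using card_frac_range[OF ad0] unfolding D_def by simp
  qed
  have fF: "finite (F v)" if "v \<in> V" for v using cF[OF that] D0 by (metis card_ge_0_finite)
  have "frl ` Theta A (Suc m) = (\<lambda>(v, f). v @ [f]) ` (SIGMA v:V. F v)"
    unfolding Theta_Suc[OF dm ad0] V_def F_def by (auto simp: frl_app image_iff) metis
  moreover have "inj_on (\<lambda>(v, f). v @ [f]) (SIGMA v:V. F v)"
    by (auto simp: inj_on_def)
  ultimately have "card (frl ` Theta A (Suc m)) = card (SIGMA v:V. F v)"
    by (simp add: card_image)
  also have "\<dots> = (\<Sum>v\<in>V. card (F v))" using fV fF by (simp add: card_SigmaI)
  also have "\<dots> = (\<Sum>v\<in>V. D)" using cF by simp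
  also have "\<dots> = D ^ Suc n" using cV by simp
  finally show ?case unfolding m_def D_def by simp
qed



lemma lin_rec_comb:
  assumes "is_lin_rec A m x" "is_lin_rec A m y"
  shows "is_lin_rec A m (map (\<lambda>n. c1 * x ! n + c2 * y ! n) [0..<m])"
  unfolding lin_rec_map
proof (intro allI impI)
  fix j assume j: "j + degree A < m"
  have "(\<Sum>i\<le>degree A. of_int (coeff A i) * (c1 * x ! (j + i) + c2 * y ! (j + i))) =
     c1 * (\<Sum>i\<le>degree A. of_int (coeff A i) * x ! (j + i)) + c2 * (\<Sum>i\<le>degree A. of_int (coeff A i) * y ! (j + i))"
    by (simp add: sum_distrib_left sum.distrib algebra_simps)
  also have "\<dots> = 0" using assms j by (simp add: is_lin_rec_def)
  finally show "(\<Sum>i\<le>degree A. of_int (coeff A i) * (c1 * x ! (j + i) + c2 * y ! (j + i))) = 0" .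
qed

lemma Theta_comb:
  assumes "x \<in> Theta A m" "y \<in> Theta A m" "degree A \<le> m"
  shows "map (\<lambda>n. of_int c1 * x ! n + of_int c2 * y ! n) [0..<m] \<in> Theta A m"
  using assms lin_rec_comb[of A m x y] by (auto simp: Theta_def intro!: Ints_add Ints_mult)

lemma Lambda_comb:
  assumes "x \<in> Lambda A m" "y \<in> Lambda A m"
  shows "map (\<lambda>n. of_int c1 * x ! n + of_int c2 * y ! n) [0..<m] \<in> Lambda A m"
  using assms lin_rec_comb[of A m x y] by (auto simp: Lambda_def intro!: Ints_add Ints_mult)

lemma len_Theta: "x \<in> Theta A m \<Longrightarrow> length x = m" by (simp add: Theta_def is_lin_rec_def)
lemma len_Lambda: "x \<in> Lambda A m \<Longrightarrow> length x = m" by (simp add: Lambda_def is_lin_rec_def)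

lemma Lambda_sub: "degree A \<le> m \<Longrightarrow> Lambda A m \<subseteq> Theta A m"
  by (auto simp: Lambda_def Theta_def)

lemma map2_eq: "length x = m \<Longrightarrow> length y = m \<Longrightarrow> map2 (+) x y = map (\<lambda>n. x ! n + y ! n) [0..<m]"
  by (intro nth_equalityI) auto

lemma zero_Theta: "degree A \<le> m \<Longrightarrow> replicate m 0 \<in> Theta A m" by (simp add: Theta_def is_lin_rec_def)
lemma zero_Lambda: "replicate m 0 \<in> Lambda A m" by (simp add: Lambda_def is_lin_rec_def)

lemma neg_eq: "length x = m \<Longrightarrow> map uminus x = map (\<lambda>n. of_int 0 * x ! n + of_int (-1) * x ! n) [0..<m]"
  by (intro nth_equalityI) auto

lemma group_G:
  assumes "degree A \<le> m"
  shows "group (vec_add_group m (Theta A m))"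
proof (rule groupI)
  fix x y assume "x \<in> carrier (vec_add_group m (Theta A m))" "y \<in> carrier (vec_add_group m (Theta A m))"
  hence x: "x \<in> Theta A m" and y: "y \<in> Theta A m" by (auto simp: vec_add_group_def)
  show "x \<otimes>\<^bsub>vec_add_group m (Theta A m)\<^esub> y \<in> carrier (vec_add_group m (Theta A m))"
    using Theta_comb[OF x y assms, of 1 1] map2_eq[OF len_Theta[OF x] len_Theta[OF y]]
    by (simp add: vec_add_group_def)
next
  show "\<one>\<^bsub>vec_add_group m (Theta A m)\<^esub> \<in> carrier (vec_add_group m (Theta A m))"
    by (simp add: vec_add_group_def zero_Theta assms)
next
  fix x y z assume "x \<in> carrier (vec_add_group m (Theta A m))" "y \<in> carrier (vec_add_group m (Theta A m))"
    "z \<in> carrier (vec_add_group m (Theta A m))"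
  hence "length x = m" "length y = m" "length z = m" by (auto simp: vec_add_group_def len_Theta)
  then show "x \<otimes>\<^bsub>vec_add_group m (Theta A m)\<^esub> y \<otimes>\<^bsub>vec_add_group m (Theta A m)\<^esub> z =
           x \<otimes>\<^bsub>vec_add_group m (Theta A m)\<^esub> (y \<otimes>\<^bsub>vec_add_group m (Theta A m)\<^esub> z)"
    by (simp add: vec_add_group_def) (intro nth_equalityI, auto)
next
  fix x assume "x \<in> carrier (vec_add_group m (Theta A m))"
  hence "length x = m" by (auto simp: vec_add_group_def len_Theta)
  then show "\<one>\<^bsub>vec_add_group m (Theta A m)\<^esub> \<otimes>\<^bsub>vec_add_group m (Theta A m)\<^esub> x = x"
    by (simp add: vec_add_group_def) (intro nth_equalityI, auto)
next
  fix x assume "x \<in> carrier (vec_add_group m (Theta A m))"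
  hence x: "x \<in> Theta A m" by (auto simp: vec_add_group_def)
  have "map uminus x \<in> Theta A m" using neg_eq[OF len_Theta[OF x]] Theta_comb[OF x x assms, of 0 "-1"] by simp
  moreover have "map2 (+) (map uminus x) x = replicate m 0" using len_Theta[OF x]
    by (intro nth_equalityI) auto
  ultimately show "\<exists>y\<in>carrier (vec_add_group m (Theta A m)). y \<otimes>\<^bsub>vec_add_group m (Theta A m)\<^esub> x =
      \<one>\<^bsub>vec_add_group m (Theta A m)\<^esub>"
    by (auto simp: vec_add_group_def)
qed

lemma subgroup_L:
  assumes "degree A \<le> m"
  shows "subgroup (Lambda A m) (vec_add_group m (Theta A m))"
proof -
  interpret G: group "vec_add_group m (Theta A m)" by (rule group_G[OF assms])
  show ?thesis
  proof (rule G.subgroupI)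
    show "Lambda A m \<subseteq> carrier (vec_add_group m (Theta A m))"
      using Lambda_sub[OF assms] by (simp add: vec_add_group_def)
    show "Lambda A m \<noteq> {}" using zero_Lambda by blast
  next
    fix a assume a: "a \<in> Lambda A m"
    have aT: "a \<in> Theta A m" using a Lambda_sub[OF assms] by blast
    have nL: "map uminus a \<in> Lambda A m" using neg_eq[OF len_Lambda[OF a]] Lambda_comb[OF a a, of 0 "-1"] by simp
    have nT: "map uminus a \<in> Theta A m" using nL Lambda_sub[OF assms] by blast
    have "inv\<^bsub>vec_add_group m (Theta A m)\<^esub> a = map uminus a"
    proof (rule G.inv_equality)
      show "map uminus a \<otimes>\<^bsub>vec_add_group m (Theta A m)\<^esub> a = \<one>\<^bsub>vec_add_group m (Theta A m)\<^esub>"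
        using len_Lambda[OF a] by (simp add: vec_add_group_def) (intro nth_equalityI, auto)
    qed (use aT nT in \<open>auto simp: vec_add_group_def\<close>)
    then show "inv\<^bsub>vec_add_group m (Theta A m)\<^esub> a \<in> Lambda A m" using nL by simp
  next
    fix a b assume a: "a \<in> Lambda A m" and b: "b \<in> Lambda A m"
    show "a \<otimes>\<^bsub>vec_add_group m (Theta A m)\<^esub> b \<in> Lambda A m"
      using Lambda_comb[OF a b, of 1 1] map2_eq[OF len_Lambda[OF a] len_Lambda[OF b]]
      by (simp add: vec_add_group_def)
  qed
qed

lemma coset_eq:
  assumes dm: "degree A \<le> m" and a: "a \<in> Theta A m"
  shows "Lambda A m #>\<^bsub>vec_add_group m (Theta A m)\<^esub> a = {x \<in> Theta A m. frl x = frl a}"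
proof
  have la: "length a = m" using len_Theta[OF a] .
  show "Lambda A m #>\<^bsub>vec_add_group m (Theta A m)\<^esub> a \<subseteq> {x \<in> Theta A m. frl x = frl a}"
  proof
    fix z assume "z \<in> Lambda A m #>\<^bsub>vec_add_group m (Theta A m)\<^esub> a"
    then obtain h where h: "h \<in> Lambda A m" "z = map2 (+) h a"
      by (auto simp: r_coset_def vec_add_group_def)
    have hT: "h \<in> Theta A m" using h Lambda_sub[OF dm] by blast
    have lh: "length h = m" using len_Lambda[OF h(1)] .
    have "z \<in> Theta A m" using Theta_comb[OF hT a dm, of 1 1] h(2) map2_eq[OF lh la] by simp
    moreover have "frl z = frl a" unfolding h(2) frl_def using lh la h(1)
      by (intro nth_equalityI) (auto simp: Lambda_def frac_add_int_left)
    ultimately show "z \<in> {x \<in> Theta A m. frl x = frl a}" by blast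
  qed
next
  have la: "length a = m" using len_Theta[OF a] .
  show "{x \<in> Theta A m. frl x = frl a} \<subseteq> Lambda A m #>\<^bsub>vec_add_group m (Theta A m)\<^esub> a"
  proof
    fix x assume "x \<in> {x \<in> Theta A m. frl x = frl a}"
    hence x: "x \<in> Theta A m" "frl x = frl a" by auto
    have lx: "length x = m" using len_Theta[OF x(1)] .
    define h where "h = map (\<lambda>n. of_int 1 * x ! n + of_int (-1) * a ! n) [0..<m]"
    have hT: "h \<in> Theta A m" unfolding h_def by (rule Theta_comb[OF x(1) a dm])
    have "x ! n - a ! n \<in> \<int>" if "n < m" for n
    proof -
      have "frac (x ! n) = frac (a ! n)" using x(2) that lx la unfolding frl_def by (metis nth_map)
      then obtain k where "x ! n = a ! n + of_int k" using frac_eqE by blast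
      then show ?thesis by simp
    qed
    hence "h \<in> Lambda A m" using hT unfolding h_def by (auto simp: Lambda_def Theta_def)
    moreover have "x = map2 (+) h a" unfolding h_def using lx la by (intro nth_equalityI) auto
    ultimately show "x \<in> Lambda A m #>\<^bsub>vec_add_group m (Theta A m)\<^esub> a"
      by (auto simp: r_coset_def vec_add_group_def)
  qed
qed

lemma card_rcosets:
  assumes cont: "content A = 1" and deg: "degree A \<ge> 1" and dm: "degree A \<le> m"
  shows "card (rcosets\<^bsub>vec_add_group m (Theta A m)\<^esub> (Lambda A m)) = nat \<bar>lead_coeff A\<bar> ^ (m - degree A)"
proof -
  have "rcosets\<^bsub>vec_add_group m (Theta A m)\<^esub> (Lambda A m) =
        (\<lambda>v. {x \<in> Theta A m. frl x = v}) ` (frl ` Theta A m)"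
    unfolding RCOSETS_def using coset_eq[OF dm] by (auto simp: vec_add_group_def)
  moreover have "inj_on (\<lambda>v. {x \<in> Theta A m. frl x = v}) (frl ` Theta A m)"
  proof (rule inj_onI)
    fix v w assume "v \<in> frl ` Theta A m" "w \<in> frl ` Theta A m"
      and e: "{x \<in> Theta A m. frl x = v} = {x \<in> Theta A m. frl x = w}"
    then obtain a where "a \<in> Theta A m" "v = frl a" by blast
    then show "v = w" using e by blast
  qed
  ultimately have "card (rcosets\<^bsub>vec_add_group m (Theta A m)\<^esub> (Lambda A m)) = card (frl ` Theta A m)"
    by (simp add: card_image)
  also have "\<dots> = nat \<bar>coeff A (degree A)\<bar> ^ (m - degree A)"
    using card_frl[OF cont deg, of "m - degree A"] dm by simp
  finally show ?thesis by simp
qed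


theorem corollary1:
  fixes A :: "int poly" and m :: nat
  assumes "content A = 1"
    and "degree A \<ge> 1"
    and "coeff A 0 \<noteq> 0"
    and "m > degree A"
  shows "group (vec_add_group m (Theta A m))
    \<and> subgroup (Lambda A m) (vec_add_group m (Theta A m))
    \<and> card (rcosets\<^bsub>vec_add_group m (Theta A m)\<^esub> (Lambda A m))
        = nat \<bar>lead_coeff A\<bar> ^ (m - degree A)"
proof -
  have dm: "degree A \<le> m" using assms(4) by simp
  show ?thesis using group_G[OF dm] subgroup_L[OF dm] card_rcosets[OF assms(1,2) dm] by blast
qed

end
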